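(* The logic $\mathsf{LCA}$ is sound and complete for the class of all models: for every $\varphi\in\mathcal{L}$, $\varphi$ is a theorem of $\mathsf{LCA}$ iff $\varphi$ is valid (true in every model $(S,U)$). Here $\mathsf{LCA}$ is the extension of classical propositional logic (over $\mathcal{L}$) by the following axioms and rules, for all $i\in\mathit{Agt}$, $\alpha\in\mathcal{L}_0$, $\varphi,\psi\in\mathcal{L}$, and $\circledcirc\in\{\mathcal{A}_i,\mathcal{R}_i,\mathcal{A}^{\mathsf{real}}_i,\mathcal{R}^{\mathsf{real}}_i\}$: (A1) $(\Box_i\varphi\wedge\Box_i(\varphi\to\psi))\to\Box_i\psi$; (A2) $(\circledcirc\varphi\wedge\circledcirc(\neg\varphi\wedge\psi))\to\circledcirc\psi$; (A3) $\triangle_i\alpha\to\Box_i\alpha$; (A4) $\triangle_i(\alpha\to\mathsf{rew}_i)\to\mathcal{A}_i\alpha$; (A5) $\triangle_i(\alpha\to\mathsf{pun}_i)\to\mathcal{R}_i\alpha$; (A6) $\mathcal{A}_i\varphi\to\mathcal{A}^{\mathsf{real}}_i\varphi$; (A7) $\mathcal{R}_i\varphi\to\mathcal{R}^{\mathsf{real}}_i\varphi$; (A8) $\Box_i\varphi\to\mathcal{A}^{\mathsf{real}}_i\neg\varphi$; (A9) $\Box_i\varphi\to\mathcal{R}^{\mathsf{real}}_i\neg\varphi$; (A10) $\mathcal{A}^{\mathsf{real}}_i\varphi\to\Box_i(\varphi\to\mathsf{rew}_i)$; (A11) $\mathcal{R}^{\mathsf{real}}_i\varphi\to\Box_i(\varphi\to\mathsf{pun}_i)$;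 (R1) from $\varphi$ infer $\Box_i\varphi$; (R2) from $\varphi$ infer $\circledcirc\neg\varphi$; (R3) from $\varphi\leftrightarrow\psi$ infer $\circledcirc\varphi\leftrightarrow\circledcirc\psi$.
   Context: Let $\mathit{Agt}=\{1,\dots,n\}$ be a finite set of agents and $\mathit{Atm}$ a countably infinite set of atoms containing, for each $i\in\mathit{Agt}$, special atoms $\mathsf{rew}_i$ and $\mathsf{pun}_i$. The language $\mathcal{L}_0$ is given by $\alpha::=p\mid\neg\alpha\mid\alpha\wedge\alpha\mid \triangle_i\alpha$ ($p\in\mathit{Atm}$, $i\in\mathit{Agt}$); $\to,\vee,\leftrightarrow,\top,\bot$ are the usual abbreviations. A state is a tuple $S=((B_i)_{i\in\mathit{Agt}},V)$ with $B_i\subseteq\mathcal{L}_0$ and $V\subseteq\mathit{Atm}$; $\mathbf{S}$ is the set of all states. Truth of $\mathcal{L}_0$-formulas: $S\models p$ iff $p\in V$; Boolean clauses as usual; $S\models\triangle_i\alpha$ iff $\alpha\in B_i$. Define $\mathit{Des}_i(S)=\{\alpha\in\mathcal{L}_0:(\alpha\to\mathsf{rew}_i)\in B_i\}$ and $\mathit{Und}_i(S)=\{\alpha\in\mathcal{L}_0:(\alpha\to\mathsf{pun}_i)\in B_i\}$. Relations on $\mathbf{S}$: $S\,\mathcal{E}_i\,S'$ iff $S'\models\alpha$ for all $\alpha\in B_i$; $S\,\mathcal{A}_i\,S'$ iff $S'\models\alpha$ for some $\alpha\in\mathit{Des}_i(S)$; $S\,\mathcal{R}_i\,S'$ iff $S'\models\alpha$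 for some $\alpha\in\mathit{Und}_i(S)$. A model is a pair $(S,U)$ with $S\in U\subseteq\mathbf{S}$. The language $\mathcal{L}$ is $\varphi::=\alpha\mid\neg\varphi\mid\varphi\wedge\varphi\mid\Box_i\varphi\mid\mathcal{A}_i\varphi\mid\mathcal{R}_i\varphi\mid\mathcal{A}^{\mathsf{real}}_i\varphi\mid\mathcal{R}^{\mathsf{real}}_i\varphi$ with $\alpha\in\mathcal{L}_0$. Semantics: $(S,U)\models\alpha$ iff $S\models\alpha$; Boolean clauses as usual; $(S,U)\models\Box_i\varphi$ iff for all $S'\in U$ with $S\mathcal{E}_iS'$, $(S',U)\models\varphi$; $(S,U)\models\mathcal{A}_i\varphi$ iff for all $S'\in U$ with $(S',U)\models\varphi$, $S\mathcal{A}_iS'$; $(S,U)\models\mathcal{R}_i\varphi$ iff for all $S'\in U$ with $(S',U)\models\varphi$, $S\mathcal{R}_iS'$; $(S,U)\models\mathcal{A}^{\mathsf{real}}_i\varphi$ iff for all $S'\in U$ with $(S',U)\models\varphi$ and $S\mathcal{E}_iS'$, $S\mathcal{A}_iS'$; $(S,U)\models\mathcal{R}^{\mathsf{real}}_i\varphi$ iff for all $S'\in U$ with $(S',U)\models\varphi$ and $S\mathcal{E}_iS'$, $S\mathcal{R}_iS'$. *)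

theory Defs
  imports Main "HOL-Library.Countable"
begin

datatype mkind = MA | MR | MAreal | MRreal

text \<open>One datatype for all formulas; L0 and L are carved out by predicates
  (the argument of the triangle operator must be an L0 formula).
  'a = atoms, 'g = agents.\<close>
datatype ('a, 'g) fm =
    Atom 'a
  | Neg "('a, 'g) fm"
  | Conj "('a, 'g) fm" "('a, 'g) fm"
  | Tri 'g "('a, 'g) fm"
  | Box 'g "('a, 'g) fm"
  | Mod mkind 'g "('a, 'g) fm"

definition Imp :: "('a, 'g) fm \<Rightarrow> ('a, 'g) fm \<Rightarrow> ('a, 'g) fm" where
  "Imp p q = Neg (Conj p (Neg q))"

definition Iff :: "('a, 'g) fm \<Rightarrow> ('a, 'g) fm \<Rightarrow> ('a, 'g) fm" where
  "Iff p q = Conj (Imp p q) (Imp q p)"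

fun is_L0 :: "('a, 'g) fm \<Rightarrow> bool" where
  "is_L0 (Atom p) = True"
| "is_L0 (Neg a) = is_L0 a"
| "is_L0 (Conj a b) = (is_L0 a \<and> is_L0 b)"
| "is_L0 (Tri i a) = is_L0 a"
| "is_L0 (Box i a) = False"
| "is_L0 (Mod k i a) = False"

fun is_L :: "('a, 'g) fm \<Rightarrow> bool" where
  "is_L (Atom p) = True"
| "is_L (Neg a) = is_L a"
| "is_L (Conj a b) = (is_L a \<and> is_L b)"
| "is_L (Tri i a) = is_L0 a"
| "is_L (Box i a) = is_L a"
| "is_L (Mod k i a) = is_L a"

text \<open>A state: belief bases B_i (sets of L0 formulas) and a valuation V.\<close>
type_synonym ('a, 'g) state = "('g \<Rightarrow> ('a, 'g) fm set) \<times> 'a set"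

definition states :: "('a, 'g) state set" where
  "states = {S. \<forall>i. \<forall>a \<in> fst S i. is_L0 a}"

text \<open>Truth of L0 formulas at a state (only meaningful on L0).\<close>
fun sat0 :: "('a, 'g) state \<Rightarrow> ('a, 'g) fm \<Rightarrow> bool" where
  "sat0 S (Atom p) = (p \<in> snd S)"
| "sat0 S (Neg a) = (\<not> sat0 S a)"
| "sat0 S (Conj a b) = (sat0 S a \<and> sat0 S b)"
| "sat0 S (Tri i a) = (a \<in> fst S i)"
| "sat0 S (Box i a) = False"
| "sat0 S (Mod k i a) = False"

definition Des :: "('g \<Rightarrow> 'a) \<Rightarrow> 'g \<Rightarrow> ('a, 'g) state \<Rightarrow> ('a, 'g) fm set" where
  "Des rew i S = {a. is_L0 a \<and> Imp a (Atom (rew i)) \<in> fst S i}"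

definition Und :: "('g \<Rightarrow> 'a) \<Rightarrow> 'g \<Rightarrow> ('a, 'g) state \<Rightarrow> ('a, 'g) fm set" where
  "Und pun i S = {a. is_L0 a \<and> Imp a (Atom (pun i)) \<in> fst S i}"

definition relE :: "'g \<Rightarrow> ('a, 'g) state \<Rightarrow> ('a, 'g) state \<Rightarrow> bool" where
  "relE i S S' = (\<forall>a \<in> fst S i. sat0 S' a)"

definition relA :: "('g \<Rightarrow> 'a) \<Rightarrow> 'g \<Rightarrow> ('a, 'g) state \<Rightarrow> ('a, 'g) state \<Rightarrow> bool" where
  "relA rew i S S' = (\<exists>a \<in> Des rew i S. sat0 S' a)"

definition relR :: "('g \<Rightarrow> 'a) \<Rightarrow> 'g \<Rightarrow> ('a, 'g) state \<Rightarrow> ('a, 'g) state \<Rightarrow> bool" where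
  "relR pun i S S' = (\<exists>a \<in> Und pun i S. sat0 S' a)"

fun sat :: "('g \<Rightarrow> 'a) \<Rightarrow> ('g \<Rightarrow> 'a) \<Rightarrow> ('a, 'g) state set \<Rightarrow> ('a, 'g) state
             \<Rightarrow> ('a, 'g) fm \<Rightarrow> bool" where
  "sat rew pun U S (Atom p) = sat0 S (Atom p)"
| "sat rew pun U S (Tri i a) = sat0 S (Tri i a)"
| "sat rew pun U S (Neg a) = (\<not> sat rew pun U S a)"
| "sat rew pun U S (Conj a b) = (sat rew pun U S a \<and> sat rew pun U S b)"
| "sat rew pun U S (Box i a) = (\<forall>S' \<in> U. relE i S S' \<longrightarrow> sat rew pun U S' a)"
| "sat rew pun U S (Mod MA i a) = (\<forall>S' \<in> U. sat rew pun U S' a \<longrightarrow> relA rew i S S')"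
| "sat rew pun U S (Mod MR i a) = (\<forall>S' \<in> U. sat rew pun U S' a \<longrightarrow> relR pun i S S')"
| "sat rew pun U S (Mod MAreal i a) =
     (\<forall>S' \<in> U. sat rew pun U S' a \<and> relE i S S' \<longrightarrow> relA rew i S S')"
| "sat rew pun U S (Mod MRreal i a) =
     (\<forall>S' \<in> U. sat rew pun U S' a \<and> relE i S S' \<longrightarrow> relR pun i S S')"

definition valid :: "('g \<Rightarrow> 'a) \<Rightarrow> ('g \<Rightarrow> 'a) \<Rightarrow> ('a, 'g) fm \<Rightarrow> bool" where
  "valid rew pun p = (\<forall>U S. U \<subseteq> states \<longrightarrow> S \<in> U \<longrightarrow> sat rew pun U S p)"

text \<open>Propositional tautologies over L: every formula whose main connective
  is not a Boolean one is treated as a propositional variable.\<close>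
fun pc_eval :: "(('a, 'g) fm \<Rightarrow> bool) \<Rightarrow> ('a, 'g) fm \<Rightarrow> bool" where
  "pc_eval v (Neg a) = (\<not> pc_eval v a)"
| "pc_eval v (Conj a b) = (pc_eval v a \<and> pc_eval v b)"
| "pc_eval v (Atom p) = v (Atom p)"
| "pc_eval v (Tri i a) = v (Tri i a)"
| "pc_eval v (Box i a) = v (Box i a)"
| "pc_eval v (Mod k i a) = v (Mod k i a)"

definition tautology :: "('a, 'g) fm \<Rightarrow> bool" where
  "tautology p = (\<forall>v. pc_eval v p)"

inductive LCA :: "('g \<Rightarrow> 'a) \<Rightarrow> ('g \<Rightarrow> 'a) \<Rightarrow> ('a, 'g) fm \<Rightarrow> bool"
  for rew :: "'g \<Rightarrow> 'a" and pun :: "'g \<Rightarrow> 'a" where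
  PC: "is_L p \<Longrightarrow> tautology p \<Longrightarrow> LCA rew pun p"
| MP: "LCA rew pun (Imp p q) \<Longrightarrow> LCA rew pun p \<Longrightarrow> LCA rew pun q"
| A1: "is_L p \<Longrightarrow> is_L q \<Longrightarrow>
        LCA rew pun (Imp (Conj (Box i p) (Box i (Imp p q))) (Box i q))"
| A2: "is_L p \<Longrightarrow> is_L q \<Longrightarrow>
        LCA rew pun (Imp (Conj (Mod k i p) (Mod k i (Conj (Neg p) q))) (Mod k i q))"
| A3: "is_L0 a \<Longrightarrow> LCA rew pun (Imp (Tri i a) (Box i a))"
| A4: "is_L0 a \<Longrightarrow> LCA rew pun (Imp (Tri i (Imp a (Atom (rew i)))) (Mod MA i a))"
| A5: "is_L0 a \<Longrightarrow> LCA rew pun (Imp (Tri i (Imp a (Atom (pun i)))) (Mod MR i a))"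
| A6: "is_L p \<Longrightarrow> LCA rew pun (Imp (Mod MA i p) (Mod MAreal i p))"
| A7: "is_L p \<Longrightarrow> LCA rew pun (Imp (Mod MR i p) (Mod MRreal i p))"
| A8: "is_L p \<Longrightarrow> LCA rew pun (Imp (Box i p) (Mod MAreal i (Neg p)))"
| A9: "is_L p \<Longrightarrow> LCA rew pun (Imp (Box i p) (Mod MRreal i (Neg p)))"
| A10: "is_L p \<Longrightarrow> LCA rew pun (Imp (Mod MAreal i p) (Box i (Imp p (Atom (rew i)))))"
| A11: "is_L p \<Longrightarrow> LCA rew pun (Imp (Mod MRreal i p) (Box i (Imp p (Atom (pun i)))))"
| R1: "LCA rew pun p \<Longrightarrow> LCA rew pun (Box i p)"
| R2: "LCA rew pun p \<Longrightarrow> LCA rew pun (Mod k i (Neg p))"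
| R3: "LCA rew pun (Iff p q) \<Longrightarrow> LCA rew pun (Iff (Mod k i p) (Mod k i q))"

end

theory Submission
  imports Defs
begin


lemma L0_L: "is_L0 a \<Longrightarrow> is_L a"
  by (induction a) auto

lemma LCA_is_L: "LCA rew pun p \<Longrightarrow> is_L p"
  by (induction rule: LCA.induct) (auto simp: Imp_def Iff_def L0_L)

definition Top :: "('a,'g) fm" where "Top = Imp (Atom undefined) (Atom undefined)"
definition Bot :: "('a,'g) fm" where "Bot = Neg Top"
definition Or :: "('a,'g) fm \<Rightarrow> ('a,'g) fm \<Rightarrow> ('a,'g) fm" where
  "Or a b = Neg (Conj (Neg a) (Neg b))"

fun conjs :: "('a,'g) fm list \<Rightarrow> ('a,'g) fm" where
  "conjs [] = Top"
| "conjs (x # xs) = Conj x (conjs xs)"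

fun disjs :: "('a,'g) fm list \<Rightarrow> ('a,'g) fm" where
  "disjs [] = Bot"
| "disjs (x # xs) = Or x (disjs xs)"

lemma pc_eval_simps[simp]:
  "pc_eval v Top" "\<not> pc_eval v Bot"
  "pc_eval v (Imp a b) = (pc_eval v a \<longrightarrow> pc_eval v b)"
  "pc_eval v (Iff a b) = (pc_eval v a \<longleftrightarrow> pc_eval v b)"
  "pc_eval v (Or a b) = (pc_eval v a \<or> pc_eval v b)"
  by (auto simp: Top_def Bot_def Imp_def Iff_def Or_def)

lemma pc_eval_conjs[simp]: "pc_eval v (conjs xs) = (\<forall>x\<in>set xs. pc_eval v x)"
  by (induction xs) auto

lemma pc_eval_disjs[simp]: "pc_eval v (disjs xs) = (\<exists>x\<in>set xs. pc_eval v x)"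
  by (induction xs) auto

lemma is_L_simps[simp]:
  "is_L (Top :: ('a,'g) fm)" "is_L (Bot :: ('a,'g) fm)"
  "is_L (Imp a b) = (is_L a \<and> is_L b)"
  "is_L (Iff a b) = (is_L a \<and> is_L b)"
  "is_L (Or a b) = (is_L a \<and> is_L b)"
  by (auto simp: Top_def Bot_def Imp_def Iff_def Or_def)

lemma is_L0_simps[simp]:
  "is_L0 (Imp a b) = (is_L0 a \<and> is_L0 b)"
  by (auto simp: Imp_def)

lemma is_L_conjs[simp]: "is_L (conjs xs) = (\<forall>x\<in>set xs. is_L x)"
  by (induction xs) auto

lemma is_L_disjs[simp]: "is_L (disjs xs) = (\<forall>x\<in>set xs. is_L x)"
  by (induction xs) auto

lemma Imp_inject[simp]: "Imp a b = Imp c d \<longleftrightarrow> a = c \<and> b = d"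
  by (auto simp: Imp_def)

lemma Imp_neq[simp]: "Imp a b \<noteq> Neg (Atom x)" "Neg (Atom x) \<noteq> Imp a b"
  by (auto simp: Imp_def)

context
  fixes rew pun :: "'g \<Rightarrow> 'a"
begin

abbreviation D :: "('a,'g) fm \<Rightarrow> bool" where "D p \<equiv> LCA rew pun p"

lemma pc0: "is_L q \<Longrightarrow> (\<And>v. pc_eval v q) \<Longrightarrow> D q"
  by (rule PC) (auto simp: tautology_def)

lemma pc1: "D p \<Longrightarrow> is_L q \<Longrightarrow> (\<And>v. pc_eval v p \<Longrightarrow> pc_eval v q) \<Longrightarrow> D q"
proof -
  assume a: "D p" "is_L q" "\<And>v. pc_eval v p \<Longrightarrow> pc_eval v q"
  have "D (Imp p q)" using a LCA_is_L[OF a(1)] by (intro pc0) auto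
  then show ?thesis using a(1) by (rule MP)
qed

lemma pcN: "\<forall>x\<in>set ps. D x \<Longrightarrow> is_L q \<Longrightarrow> (\<And>v. \<forall>x\<in>set ps. pc_eval v x \<Longrightarrow> pc_eval v q) \<Longrightarrow> D q"
proof -
  assume a: "\<forall>x\<in>set ps. D x" "is_L q" "\<And>v. \<forall>x\<in>set ps. pc_eval v x \<Longrightarrow> pc_eval v q"
  have "D (conjs ps)" using a(1)
  proof (induction ps)
    case Nil then show ?case by (intro pc0) auto
  next
    case (Cons x ps)
    then have 1: "D x" "D (conjs ps)" by auto
    have "D (Imp (conjs ps) (Conj x (conjs ps)))"
      using LCA_is_L[OF 1(1)] LCA_is_L[OF 1(2)] by - (rule pc1[OF 1(1)], auto)
    then show ?case using 1(2) by (auto intro: MP)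
  qed
  then show ?thesis using a(2,3) by (rule pc1) auto
qed

lemma pc2: "D p1 \<Longrightarrow> D p2 \<Longrightarrow> is_L q \<Longrightarrow> (\<And>v. pc_eval v p1 \<Longrightarrow> pc_eval v p2 \<Longrightarrow> pc_eval v q) \<Longrightarrow> D q"
  by (rule pcN[of "[p1,p2]"]) auto

lemma pc3: "D p1 \<Longrightarrow> D p2 \<Longrightarrow> D p3 \<Longrightarrow> is_L q \<Longrightarrow>
   (\<And>v. pc_eval v p1 \<Longrightarrow> pc_eval v p2 \<Longrightarrow> pc_eval v p3 \<Longrightarrow> pc_eval v q) \<Longrightarrow> D q"
  by (rule pcN[of "[p1,p2,p3]"]) auto

lemma pc4: "D p1 \<Longrightarrow> D p2 \<Longrightarrow> D p3 \<Longrightarrow> D p4 \<Longrightarrow> is_L q \<Longrightarrow>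
   (\<And>v. pc_eval v p1 \<Longrightarrow> pc_eval v p2 \<Longrightarrow> pc_eval v p3 \<Longrightarrow> pc_eval v p4 \<Longrightarrow> pc_eval v q) \<Longrightarrow> D q"
  by (rule pcN[of "[p1,p2,p3,p4]"]) auto

lemma pc5: "D p1 \<Longrightarrow> D p2 \<Longrightarrow> D p3 \<Longrightarrow> D p4 \<Longrightarrow> D p5 \<Longrightarrow> is_L q \<Longrightarrow>
   (\<And>v. pc_eval v p1 \<Longrightarrow> pc_eval v p2 \<Longrightarrow> pc_eval v p3 \<Longrightarrow> pc_eval v p4 \<Longrightarrow> pc_eval v p5 \<Longrightarrow> pc_eval v q) \<Longrightarrow> D q"
  by (rule pcN[of "[p1,p2,p3,p4,p5]"]) auto

lemma DL: "D p \<Longrightarrow> is_L p" by (rule LCA_is_L)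

lemma box_mono: "D (Imp p q) \<Longrightarrow> D (Imp (Box i p) (Box i q))"
proof -
  assume a: "D (Imp p q)"
  then have L: "is_L p" "is_L q" using DL[OF a] by auto
  have 1: "D (Box i (Imp p q))" using a by (rule R1)
  have 2: "D (Imp (Conj (Box i p) (Box i (Imp p q))) (Box i q))" using L by (rule A1)
  show ?thesis using L by - (rule pc2[OF 1 2], auto)
qed

lemma box_conjs: "D (Imp (conjs xs) q) \<Longrightarrow> D (Imp (conjs (map (Box i) xs)) (Box i q))"
proof (induction xs arbitrary: q)
  case Nil
  then have "D q" using DL[OF Nil] by - (rule pc1[OF Nil], auto)
  then have "D (Box i q)" by (rule R1)
  then show ?case using DL[OF Nil] by - (rule pc1, auto)
next
  case (Cons x xs)
  have L: "is_L x" "\<forall>y\<in>set xs. is_L y" "is_L q" using DL[OF Cons.prems] by auto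
  have "D (Imp (conjs xs) (Imp x q))" using L by - (rule pc1[OF Cons.prems], auto)
  then have 1: "D (Imp (conjs (map (Box i) xs)) (Box i (Imp x q)))" by (rule Cons.IH)
  have 2: "D (Imp (Conj (Box i x) (Box i (Imp x q))) (Box i q))" using L by (intro A1) auto
  show ?case using L by - (rule pc2[OF 1 2], auto)
qed

lemma mod_bot: "D (Mod k i Bot)"
proof -
  have "D Top" by (rule pc0) auto
  then show ?thesis unfolding Bot_def by (rule R2)
qed

lemma mod_anti: "D (Imp p q) \<Longrightarrow> D (Imp (Mod k i q) (Mod k i p))"
proof -
  assume a: "D (Imp p q)"
  then have L: "is_L p" "is_L q" using DL[OF a] by auto
  have 1: "D (Imp (Conj (Mod k i q) (Mod k i (Conj (Neg q) (Conj q p)))) (Mod k i (Conj q p)))"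
    using L by (intro A2) auto
  have "D (Iff Bot (Conj (Neg q) (Conj q p)))" using L by (intro pc0) auto
  then have 2: "D (Iff (Mod k i Bot) (Mod k i (Conj (Neg q) (Conj q p))))" by (rule R3)
  have "D (Iff (Conj q p) p)" using L by - (rule pc1[OF a], auto)
  then have 3: "D (Iff (Mod k i (Conj q p)) (Mod k i p))" by (rule R3)
  show ?thesis using L by - (rule pc4[OF mod_bot 1 2 3], auto)
qed

lemma mod_union: "is_L p \<Longrightarrow> is_L q \<Longrightarrow> D (Imp (Conj (Mod k i p) (Mod k i q)) (Mod k i (Or p q)))"
proof -
  assume L: "is_L p" "is_L q"
  have 1: "D (Imp (Conj (Mod k i p) (Mod k i (Conj (Neg p) (Or p q)))) (Mod k i (Or p q)))"
    using L by (intro A2) auto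
  have "D (Imp (Conj (Neg p) (Or p q)) q)" using L by (intro pc0) auto
  then have 2: "D (Imp (Mod k i q) (Mod k i (Conj (Neg p) (Or p q))))" by (rule mod_anti)
  show ?thesis using L by - (rule pc2[OF 1 2], auto)
qed

lemma mod_disjs: "\<forall>q\<in>set qs. is_L q \<Longrightarrow> D (Imp (conjs (map (Mod k i) qs)) (Mod k i (disjs qs)))"
proof (induction qs)
  case Nil
  show ?case by (rule pc1[OF mod_bot]) (use Nil in auto)
next
  case (Cons q qs)
  then have L: "is_L q" "\<forall>q\<in>set qs. is_L q" by auto
  have 1: "D (Imp (conjs (map (Mod k i) qs)) (Mod k i (disjs qs)))" using Cons by auto
  have 2: "D (Imp (Conj (Mod k i q) (Mod k i (disjs qs))) (Mod k i (Or q (disjs qs))))"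
    using L by (intro mod_union) auto
  show ?case using L by - (rule pc2[OF 1 2], auto)
qed

lemma mod_imp_disjs: "D (Imp p (disjs qs)) \<Longrightarrow> D (Imp (conjs (map (Mod k i) qs)) (Mod k i p))"
proof -
  assume a: "D (Imp p (disjs qs))"
  then have L: "is_L p" "\<forall>q\<in>set qs. is_L q" using DL[OF a] by auto
  have 1: "D (Imp (Mod k i (disjs qs)) (Mod k i p))" using a by (rule mod_anti)
  have 2: "D (Imp (conjs (map (Mod k i) qs)) (Mod k i (disjs qs)))" using L by (intro mod_disjs)
  show ?thesis using L by - (rule pc2[OF 1 2], auto)
qed

lemma collect: "\<forall>y\<in>set ys. \<exists>g\<in>G. D (Imp g (f y)) \<Longrightarrow>
   \<exists>gs. set gs \<subseteq> G \<and> D (Imp (conjs gs) (conjs (map f ys)))"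
proof (induction ys)
  case Nil
  have "D (Imp (conjs []) (conjs (map f [])))" by (intro pc0) auto
  then show ?case by (intro exI[of _ "[]"]) auto
next
  case (Cons y ys)
  then obtain g gs where g: "g \<in> G" "D (Imp g (f y))" and gs: "set gs \<subseteq> G"
    "D (Imp (conjs gs) (conjs (map f ys)))" by auto
  have "D (Imp (conjs (g # gs)) (conjs (map f (y # ys))))"
    using DL[OF g(2)] DL[OF gs(2)] by - (rule pc2[OF g(2) gs(2)], auto)
  then show ?case using g gs by (intro exI[of _ "g # gs"]) auto
qed

end



lemma sat_L0: "is_L0 a \<Longrightarrow> sat rew pun U S a = sat0 S a"
  by (induction a) auto

lemma sat_Imp[simp]: "sat rew pun U S (Imp a b) = (sat rew pun U S a \<longrightarrow> sat rew pun U S b)"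
  by (simp add: Imp_def)
lemma sat_Iff[simp]: "sat rew pun U S (Iff a b) = (sat rew pun U S a \<longleftrightarrow> sat rew pun U S b)"
  by (auto simp add: Iff_def)
lemma sat0_Imp[simp]: "sat0 S (Imp a b) = (sat0 S a \<longrightarrow> sat0 S b)"
  by (simp add: Imp_def)

lemma pc_eval_sat: "pc_eval (sat rew pun U S) p = sat rew pun U S p"
  by (induction p) auto

lemma R3_sound:
  fixes rew pun :: "'g \<Rightarrow> 'a"
  assumes "valid rew pun (Iff p q)"
  shows "valid rew pun (Iff (Mod k i p) (Mod k i q))"
  unfolding valid_def
proof (intro allI impI)
  fix U :: "('a,'g) state set" and S assume u: "U \<subseteq> states" "S \<in> U"
  have eq: "\<And>S'. S' \<in> U \<Longrightarrow> sat rew pun U S' p = sat rew pun U S' q"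
    using assms u unfolding valid_def by auto
  show "sat rew pun U S (Iff (Mod k i p) (Mod k i q))"
    by (cases k) (simp_all add: eq cong: ball_cong)
qed

lemma soundness: "LCA rew pun p \<Longrightarrow> valid rew pun p"
proof (induction rule: LCA.induct)
  case (PC p)
  then show ?case unfolding valid_def tautology_def by (metis pc_eval_sat)
next
  case (MP p q)
  then show ?case unfolding valid_def by auto
next
  case (A1 p q i)
  then show ?case unfolding valid_def by auto
next
  case (A2 p q k i)
  then show ?case unfolding valid_def by (cases k) auto
next
  case (A3 a i)
  then show ?case unfolding valid_def by (auto simp: relE_def sat_L0)
next
  case (A4 a i)
  then show ?case unfolding valid_def by (auto simp: relA_def Des_def sat_L0)
next
  case (A5 a i)
  then show ?case unfolding valid_def by (auto simp: relR_def Und_def sat_L0)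
next
  case (A6 p i)
  then show ?case unfolding valid_def by auto
next
  case (A7 p i)
  then show ?case unfolding valid_def by auto
next
  case (A8 p i)
  then show ?case unfolding valid_def by auto
next
  case (A9 p i)
  then show ?case unfolding valid_def by auto
next
  case (A10 p i)
  then show ?case unfolding valid_def by (fastforce simp: relA_def Des_def relE_def)
next
  case (A11 p i)
  then show ?case unfolding valid_def by (fastforce simp: relR_def Und_def relE_def)
next
  case (R1 p i)
  then show ?case unfolding valid_def by auto
next
  case (R2 p k i)
  then show ?case unfolding valid_def by (cases k) auto
next
  case (R3 p q k i)
  then show ?case by (intro R3_sound) simp
qed



context
  fixes rew pun :: "'g \<Rightarrow> 'a"
begin

definition consis :: "('a,'g) fm set \<Rightarrow> bool" where
  "consis X \<longleftrightarrow> \<not>(\<exists>xs. set xs \<subseteq> X \<and> LCA rew pun (Neg (conjs xs)))"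

lemma consis_mono: "consis X \<Longrightarrow> Y \<subseteq> X \<Longrightarrow> consis Y"
  unfolding consis_def by blast

lemma consis_prop: "consis X \<Longrightarrow> set xs \<subseteq> X \<Longrightarrow> \<forall>x\<in>set xs. is_L x \<Longrightarrow>
   (\<And>v. \<forall>x\<in>set xs. pc_eval v x \<Longrightarrow> False) \<Longrightarrow> False"
proof -
  assume a: "consis X" "set xs \<subseteq> X" "\<forall>x\<in>set xs. is_L x" "\<And>v. \<forall>x\<in>set xs. pc_eval v x \<Longrightarrow> False"
  have "LCA rew pun (Neg (conjs xs))" using a(3,4) by (intro pc0) auto
  then show False using a(1,2) unfolding consis_def by blast
qed

lemma consis_deriv: "consis X \<Longrightarrow> set xs \<subseteq> X \<Longrightarrow> LCA rew pun (Imp (conjs xs) c) \<Longrightarrow> Neg c \<in> X \<Longrightarrow> False"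
proof -
  assume a: "consis X" "set xs \<subseteq> X" "LCA rew pun (Imp (conjs xs) c)" "Neg c \<in> X"
  have L: "is_L (Imp (conjs xs) c)" using a(3) by (rule DL)
  have "LCA rew pun (Neg (conjs (Neg c # xs)))" using L by - (rule pc1[OF a(3)], auto)
  moreover have "set (Neg c # xs) \<subseteq> X" using a by auto
  ultimately show False using a(1) unfolding consis_def by blast
qed

lemma consis_ext: "consis X \<Longrightarrow> consis (insert c X) \<or> consis (insert (Neg c) X)"
proof (rule ccontr)
  assume a: "consis X" "\<not> (consis (insert c X) \<or> consis (insert (Neg c) X))"
  then obtain xs ys where xs: "set xs \<subseteq> insert c X" "LCA rew pun (Neg (conjs xs))"
    and ys: "set ys \<subseteq> insert (Neg c) X" "LCA rew pun (Neg (conjs ys))"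
    unfolding consis_def by blast
  define zs where "zs = filter (\<lambda>x. x \<noteq> c) xs @ filter (\<lambda>x. x \<noteq> Neg c) ys"
  have L: "\<forall>x\<in>set xs. is_L x" "\<forall>x\<in>set ys. is_L x" using DL[OF xs(2)] DL[OF ys(2)] by auto
  have "LCA rew pun (Neg (conjs zs))"
  proof (rule pc2[OF xs(2) ys(2)])
    show "is_L (Neg (conjs zs))" using L by (auto simp: zs_def)
  next
    fix v assume h: "pc_eval v (Neg (conjs xs))" "pc_eval v (Neg (conjs ys))"
    show "pc_eval v (Neg (conjs zs))"
    proof (cases "pc_eval v c")
      case True
      then show ?thesis using h(1) by (auto simp: zs_def)
    next
      case False
      then show ?thesis using h(2) by (auto simp: zs_def)
    qed
  qed
  moreover have "set zs \<subseteq> X" using xs ys by (auto simp: zs_def)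
  ultimately show False using a(1) unfolding consis_def by blast
qed

lemma lindenbaum: "finite F \<Longrightarrow> consis X \<Longrightarrow> \<exists>w\<subseteq>F. consis (X \<union> w \<union> Neg ` (F - w))"
proof (induction F rule: finite_induct)
  case empty
  then show ?case by auto
next
  case (insert x F)
  then obtain w where w: "w \<subseteq> F" "consis (X \<union> w \<union> Neg ` (F - w))" by auto
  show ?case
  proof (cases "consis (insert x (X \<union> w \<union> Neg ` (F - w)))")
    case True
    have "X \<union> insert x w \<union> Neg ` (insert x F - insert x w) \<subseteq> insert x (X \<union> w \<union> Neg ` (F - w))"
      by auto
    then show ?thesis using True w(1) by (intro exI[of _ "insert x w"]) (auto intro: consis_mono)
  next
    case False
    then have c: "consis (insert (Neg x) (X \<union> w \<union> Neg ` (F - w)))" using consis_ext[OF w(2)] by blast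
    have "X \<union> w \<union> Neg ` (insert x F - w) \<subseteq> insert (Neg x) (X \<union> w \<union> Neg ` (F - w))"
      by auto
    then show ?thesis using c w(1) by (intro exI[of _ w]) (auto intro: consis_mono)
  qed
qed

end

lemma pick: "set xs \<subseteq> B \<union> insert p (Neg ` Q) \<Longrightarrow>
  \<exists>bs qs. set bs \<subseteq> B \<and> set qs \<subseteq> Q \<and> set xs \<subseteq> set bs \<union> insert p (Neg ` set qs)"
proof (induction xs)
  case Nil
  then show ?case by (intro exI[of _ "[]"]) auto
next
  case (Cons x xs)
  then obtain bs qs where h: "set bs \<subseteq> B" "set qs \<subseteq> Q" "set xs \<subseteq> set bs \<union> insert p (Neg ` set qs)"
    by auto
  have "x \<in> B \<or> x = p \<or> (\<exists>q\<in>Q. x = Neg q)" using Cons.prems by auto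
  then show ?case
  proof (elim disjE bexE)
    assume "x \<in> B" then show ?thesis using h by (intro exI[of _ "x # bs"] exI[of _ qs]) auto
  next
    assume "x = p" then show ?thesis using h by (intro exI[of _ bs] exI[of _ qs]) auto
  next
    fix q assume "q \<in> Q" "x = Neg q"
    then show ?thesis using h by (intro exI[of _ bs] exI[of _ "q # qs"]) auto
  qed
qed

fun subs :: "('a,'g) fm \<Rightarrow> ('a,'g) fm set" where
  "subs (Atom p) = {Atom p}"
| "subs (Neg a) = insert (Neg a) (subs a)"
| "subs (Conj a b) = insert (Conj a b) (subs a \<union> subs b)"
| "subs (Tri i a) = insert (Tri i a) (subs a)"
| "subs (Box i a) = insert (Box i a) (subs a)"
| "subs (Mod k i a) = insert (Mod k i a) (subs a)"

lemma subs_self: "x \<in> subs x" by (cases x) auto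
lemma subs_trans: "y \<in> subs x \<Longrightarrow> subs y \<subseteq> subs x" by (induction x) auto
lemma finite_subs: "finite (subs x)" by (induction x) auto
lemma subs_L0: "is_L0 x \<Longrightarrow> y \<in> subs x \<Longrightarrow> is_L0 y" by (induction x) auto
lemma subs_L: "is_L x \<Longrightarrow> y \<in> subs x \<Longrightarrow> is_L y" by (induction x) (auto dest: subs_L0 L0_L)



locale cm =
  fixes rew pun :: "'g::finite \<Rightarrow> 'a" and phi :: "('a,'g) fm"
  assumes disj: "range rew \<inter> range pun = {}" and phiL: "is_L phi"
    and infA: "infinite (UNIV :: 'a set)"
begin

definition Sig :: "('a,'g) fm set" where
  "Sig = subs phi \<union> range (\<lambda>i. Atom (rew i)) \<union> range (\<lambda>i. Atom (pun i))"

lemma finite_Sig: "finite Sig"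
  unfolding Sig_def by (auto simp: finite_subs)

lemma Sig_closed: "x \<in> Sig \<Longrightarrow> y \<in> subs x \<Longrightarrow> y \<in> Sig"
  unfolding Sig_def using subs_trans by auto

lemma Sig_sub:
  "Neg a \<in> Sig \<Longrightarrow> a \<in> Sig" "Conj a b \<in> Sig \<Longrightarrow> a \<in> Sig" "Conj a b \<in> Sig \<Longrightarrow> b \<in> Sig"
  "Tri i a \<in> Sig \<Longrightarrow> a \<in> Sig" "Box i a \<in> Sig \<Longrightarrow> a \<in> Sig" "Mod k i a \<in> Sig \<Longrightarrow> a \<in> Sig"
  by (erule Sig_closed, simp add: subs_self)+

lemma Sig_Imp: "Imp a b \<in> Sig \<Longrightarrow> a \<in> Sig" "Imp a b \<in> Sig \<Longrightarrow> b \<in> Sig"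
  unfolding Imp_def using Sig_sub by blast+

lemma Sig_L: "x \<in> Sig \<Longrightarrow> is_L x"
  unfolding Sig_def using subs_L[OF phiL] by auto

lemma Sig_Tri: "Tri i a \<in> Sig \<Longrightarrow> is_L0 a"
  using Sig_L by fastforce

lemma Sig_rew[simp]: "Atom (rew i) \<in> Sig" "Atom (pun i) \<in> Sig"
  unfolding Sig_def by auto

definition Phi :: "('a,'g) fm set \<Rightarrow> ('a,'g) fm set" where
  "Phi w = w \<union> Neg ` (Sig - w)"

definition W :: "('a,'g) fm set set" where
  "W = {w. w \<subseteq> Sig \<and> consis rew pun (Phi w)}"

definition lit :: "('a,'g) fm set \<Rightarrow> ('a,'g) fm \<Rightarrow> ('a,'g) fm" where
  "lit w c = (if c \<in> w then c else Neg c)"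

lemma W_Sig: "u \<in> W \<Longrightarrow> x \<in> u \<Longrightarrow> x \<in> Sig"
  unfolding W_def by auto

lemma wprop: "consis rew pun (X \<union> Phi u) \<Longrightarrow> set cs \<subseteq> Sig \<Longrightarrow> set xs \<subseteq> X \<Longrightarrow>
  \<forall>x\<in>set xs. is_L x \<Longrightarrow>
  (\<And>v. \<forall>x\<in>set xs. pc_eval v x \<Longrightarrow> \<forall>c\<in>set cs. pc_eval v (lit u c) \<Longrightarrow> False) \<Longrightarrow> False"
proof -
  assume a: "consis rew pun (X \<union> Phi u)" "set cs \<subseteq> Sig" "set xs \<subseteq> X" "\<forall>x\<in>set xs. is_L x"
    "\<And>v. \<forall>x\<in>set xs. pc_eval v x \<Longrightarrow> \<forall>c\<in>set cs. pc_eval v (lit u c) \<Longrightarrow> False"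
  show False
  proof (rule consis_prop[OF a(1), of "xs @ map (lit u) cs"])
    show "set (xs @ map (lit u) cs) \<subseteq> X \<union> Phi u" using a(2,3) by (auto simp: lit_def Phi_def)
    show "\<forall>x\<in>set (xs @ map (lit u) cs). is_L x" using a(2,4) Sig_L by (auto simp: lit_def)
    fix v assume "\<forall>x\<in>set (xs @ map (lit u) cs). pc_eval v x"
    then show False using a(5)[of v] by auto
  qed
qed

lemma wprop0: "u \<in> W \<Longrightarrow> set cs \<subseteq> Sig \<Longrightarrow>
  (\<And>v. \<forall>c\<in>set cs. pc_eval v (lit u c) \<Longrightarrow> False) \<Longrightarrow> False"
  by (rule wprop[of "{}" u cs "[]"]) (auto simp: W_def)

lemma w_neg: assumes u: "u \<in> W" and s: "Neg a \<in> Sig" shows "Neg a \<in> u \<longleftrightarrow> a \<notin> u"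
proof -
  have s2: "a \<in> Sig" using s Sig_sub by blast
  have 1: "\<not>(Neg a \<in> u \<and> a \<in> u)"
  proof
    assume h: "Neg a \<in> u \<and> a \<in> u"
    show False by (rule wprop0[OF u, of "[Neg a, a]"]) (use h s s2 in \<open>auto simp: lit_def\<close>)
  qed
  have 2: "\<not>(Neg a \<notin> u \<and> a \<notin> u)"
  proof
    assume h: "Neg a \<notin> u \<and> a \<notin> u"
    show False by (rule wprop0[OF u, of "[Neg a, a]"]) (use h s s2 in \<open>auto simp: lit_def\<close>)
  qed
  from 1 2 show ?thesis by blast
qed

lemma w_conj: assumes u: "u \<in> W" and s: "Conj a b \<in> Sig" shows "Conj a b \<in> u \<longleftrightarrow> a \<in> u \<and> b \<in> u"
proof -
  have s2: "a \<in> Sig" "b \<in> Sig" using s Sig_sub by blast+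
  have 1: "\<not>(Conj a b \<in> u \<and> \<not>(a \<in> u \<and> b \<in> u))"
  proof
    assume h: "Conj a b \<in> u \<and> \<not>(a \<in> u \<and> b \<in> u)"
    show False by (rule wprop0[OF u, of "[Conj a b, a, b]"]) (use h s s2 in \<open>auto simp: lit_def\<close>)
  qed
  have 2: "\<not>(Conj a b \<notin> u \<and> a \<in> u \<and> b \<in> u)"
  proof
    assume h: "Conj a b \<notin> u \<and> a \<in> u \<and> b \<in> u"
    show False by (rule wprop0[OF u, of "[Conj a b, a, b]"]) (use h s s2 in \<open>auto simp: lit_def\<close>)
  qed
  from 1 2 show ?thesis by blast
qed

lemma mem1: "consis rew pun (X \<union> Phi u) \<Longrightarrow> x \<in> X \<Longrightarrow> x \<in> Sig \<Longrightarrow> x \<in> u"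
  by (rule ccontr, rule wprop[of X u "[x]" "[x]"]) (auto simp: lit_def dest: Sig_L)

lemma mem_neg: "consis rew pun (X \<union> Phi u) \<Longrightarrow> Neg x \<in> X \<Longrightarrow> x \<in> Sig \<Longrightarrow> x \<notin> u"
  by (rule notI, rule wprop[of X u "[x]" "[Neg x]"]) (auto simp: lit_def dest: Sig_L)

lemma mem_imp: "consis rew pun (X \<union> Phi u) \<Longrightarrow> Imp x y \<in> X \<Longrightarrow> x \<in> Sig \<Longrightarrow> y \<in> Sig \<Longrightarrow> x \<in> u \<Longrightarrow> y \<in> u"
  by (rule ccontr, rule wprop[of X u "[x, y]" "[Imp x y]"]) (auto simp: lit_def dest: Sig_L)

lemma lind: "consis rew pun X \<Longrightarrow> \<exists>u\<in>W. consis rew pun (X \<union> Phi u)"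
proof -
  assume "consis rew pun X"
  then obtain w where w: "w \<subseteq> Sig" "consis rew pun (X \<union> w \<union> Neg ` (Sig - w))"
    using lindenbaum[OF finite_Sig] by blast
  then have "consis rew pun (X \<union> Phi w)" by (simp add: Phi_def Un_assoc)
  moreover then have "w \<in> W" using w(1) unfolding W_def by (auto intro: consis_mono)
  ultimately show ?thesis by blast
qed

lemma finite_W: "finite W"
proof -
  have "W \<subseteq> Pow Sig" unfolding W_def by auto
  then show ?thesis using finite_Sig by (auto intro: finite_subset)
qed

definition FA :: "'a set" where "FA = {p. Atom p \<notin> Sig}"

lemma infinite_FA: "infinite FA"
proof -
  have "finite (Atom -` Sig)" by (rule finite_vimageI[OF finite_Sig]) (auto simp: inj_def)
  moreover have "FA = UNIV - Atom -` Sig" unfolding FA_def by auto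
  ultimately show ?thesis using infA by auto
qed

lemma ex_xa: "\<exists>f. inj_on f (W \<times> (UNIV :: bool set)) \<and> f ` (W \<times> (UNIV :: bool set)) \<subseteq> FA"
proof -
  have fin: "finite (W \<times> (UNIV :: bool set))" using finite_W by auto
  obtain C where C: "finite C" "card C = card (W \<times> (UNIV :: bool set))" "C \<subseteq> FA"
    using infinite_arbitrarily_large[OF infinite_FA] by blast
  obtain f where "f ` (W \<times> (UNIV :: bool set)) \<subseteq> C" "inj_on f (W \<times> (UNIV :: bool set))"
    using card_le_inj[OF fin C(1)] C(2) by auto
  then show ?thesis using C(3) by blast
qed

definition xa :: "('a,'g) fm set \<times> bool \<Rightarrow> 'a" where
  "xa = (SOME f. inj_on f (W \<times> (UNIV :: bool set)) \<and> f ` (W \<times> (UNIV :: bool set)) \<subseteq> FA)"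

lemma xa_inj: "inj_on xa (W \<times> UNIV)" and xa_FA: "t \<in> W \<times> UNIV \<Longrightarrow> xa t \<in> FA"
  using someI_ex[OF ex_xa] unfolding xa_def[symmetric] by auto

lemma xa_fresh: "t \<in> W \<times> UNIV \<Longrightarrow> Atom (xa t) \<notin> Sig"
  using xa_FA unfolding FA_def by auto

end



context cm
begin

definition kinds :: "(mkind \<times> mkind \<times> ('g \<Rightarrow> 'a)) set" where
  "kinds = {(MA, MAreal, rew), (MR, MRreal, pun)}"

lemma kinds_ax:
  assumes "(k, kr, r) \<in> kinds"
  shows "is_L0 a \<Longrightarrow> LCA rew pun (Imp (Tri i (Imp a (Atom (r i)))) (Mod k i a))"
    and "is_L p \<Longrightarrow> LCA rew pun (Imp (Mod k i p) (Mod kr i p))"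
    and "is_L p \<Longrightarrow> LCA rew pun (Imp (Box i p) (Mod kr i (Neg p)))"
    and "is_L p \<Longrightarrow> LCA rew pun (Imp (Mod kr i p) (Box i (Imp p (Atom (r i)))))"
  using assms unfolding kinds_def by (auto intro: LCA.intros)

lemma kinds_uniq: "(k, kr, r) \<in> kinds \<Longrightarrow> (k', kr', r') \<in> kinds \<Longrightarrow> r i = r' j \<Longrightarrow> k = k' \<and> kr = kr' \<and> r = r'"
  using disj unfolding kinds_def by auto

definition Rel :: "'g \<Rightarrow> ('a,'g) fm set \<Rightarrow> ('a,'g) fm set \<Rightarrow> bool" where
  "Rel i w u \<longleftrightarrow> (\<forall>x. Box i x \<in> w \<longrightarrow> x \<in> u) \<and>
     (\<forall>k kr r p. (k,kr,r) \<in> kinds \<longrightarrow> (Mod k i p \<in> w \<or> Mod kr i p \<in> w) \<longrightarrow> p \<in> u \<longrightarrow> Atom (r i) \<in> u) \<and>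
     (\<forall>a. Tri i a \<in> w \<longrightarrow> a \<in> u)"

definition BP :: "'g \<Rightarrow> ('a,'g) fm set \<Rightarrow> ('a,'g) fm set" where
  "BP i w = {x. Box i x \<in> w} \<union>
     {Imp p (Atom (r i)) | p k kr r. (k,kr,r) \<in> kinds \<and> (Mod k i p \<in> w \<or> Mod kr i p \<in> w)} \<union>
     {a. Tri i a \<in> w}"

lemma BP_box: assumes u: "u \<in> W" shows "\<forall>x\<in>BP i u. \<exists>g\<in>u. LCA rew pun (Imp g (Box i x))"
proof
  fix x assume "x \<in> BP i u"
  then consider (b) "Box i x \<in> u"
    | (m) p k kr r where "x = Imp p (Atom (r i))" "(k,kr,r) \<in> kinds" "Mod k i p \<in> u"
    | (mr) p k kr r where "x = Imp p (Atom (r i))" "(k,kr,r) \<in> kinds" "Mod kr i p \<in> u"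
    | (t) "Tri i x \<in> u"
    unfolding BP_def by blast
  then show "\<exists>g\<in>u. LCA rew pun (Imp g (Box i x))"
  proof cases
    case b
    have "LCA rew pun (Imp (Box i x) (Box i x))" using Sig_L[OF W_Sig[OF u b]] by (intro pc0) auto
    then show ?thesis using b by blast
  next
    case m
    have L: "is_L p" using Sig_L[OF W_Sig[OF u m(3)]] by simp
    have 1: "LCA rew pun (Imp (Mod k i p) (Mod kr i p))" using kinds_ax(2)[OF m(2) L] .
    have 2: "LCA rew pun (Imp (Mod kr i p) (Box i (Imp p (Atom (r i)))))" using kinds_ax(4)[OF m(2) L] .
    have "LCA rew pun (Imp (Mod k i p) (Box i x))" using L m(1) by - (rule pc2[OF 1 2], auto)
    then show ?thesis using m by blast
  next
    case mr
    have L: "is_L p" using Sig_L[OF W_Sig[OF u mr(3)]] by simp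
    have "LCA rew pun (Imp (Mod kr i p) (Box i x))" using kinds_ax(4)[OF mr(2) L] mr(1) by simp
    then show ?thesis using mr by blast
  next
    case t
    have "is_L0 x" using Sig_Tri[OF W_Sig[OF u t]] .
    then have "LCA rew pun (Imp (Tri i x) (Box i x))" by (rule A3)
    then show ?thesis using t by blast
  qed
qed

lemma BP_L: "u \<in> W \<Longrightarrow> x \<in> BP i u \<Longrightarrow> is_L x"
proof -
  assume u: "u \<in> W" and x: "x \<in> BP i u"
  have S: "\<And>y. y \<in> u \<Longrightarrow> y \<in> Sig" using W_Sig[OF u] .
  from x show ?thesis unfolding BP_def
  proof (elim UnE CollectE exE conjE)
    assume "Box i x \<in> u" then show ?thesis using S Sig_sub Sig_L by blast
  next
    fix p k kr r assume "x = Imp p (Atom (r i))" "Mod k i p \<in> u \<or> Mod kr i p \<in> u"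
    then have "Mod k i p \<in> Sig \<or> Mod kr i p \<in> Sig" using S by blast
    then have "is_L p" using Sig_sub(6) Sig_L by blast
    then show ?thesis using \<open>x = Imp p (Atom (r i))\<close> by simp
  next
    assume "Tri i x \<in> u" then show ?thesis using S Sig_Tri L0_L by blast
  qed
qed

lemma BP_Rel: assumes c: "consis rew pun (X \<union> Phi u')" and sub: "BP i u \<subseteq> X" and u: "u \<in> W"
  shows "Rel i u u'"
  unfolding Rel_def
proof (intro conjI allI impI)
  fix x assume "Box i x \<in> u"
  then show "x \<in> u'" using sub by (intro mem1[OF c]) (auto simp: BP_def dest: W_Sig[OF u] Sig_sub)
next
  fix k kr r p assume k: "(k, kr, r) \<in> kinds" and m: "Mod k i p \<in> u \<or> Mod kr i p \<in> u" and p: "p \<in> u'"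
  have "Imp p (Atom (r i)) \<in> X" using sub k m unfolding BP_def by blast
  moreover have "p \<in> Sig" using m by (auto dest: W_Sig[OF u] Sig_sub)
  moreover have "Atom (r i) \<in> Sig" using k unfolding kinds_def by auto
  ultimately show "Atom (r i) \<in> u'" using mem_imp[OF c] p by blast
next
  fix a assume "Tri i a \<in> u"
  then show "a \<in> u'" using sub by (intro mem1[OF c]) (auto simp: BP_def dest: W_Sig[OF u] Sig_sub)
qed

lemma ex_box: assumes u: "u \<in> W" and b: "Box i c \<in> Sig" "Box i c \<notin> u"
  shows "\<exists>u'\<in>W. Rel i u u' \<and> c \<notin> u'"
proof -
  have cS: "c \<in> Sig" using b Sig_sub by blast
  have uc: "consis rew pun (Phi u)" using u unfolding W_def by auto
  have nb: "Neg (Box i c) \<in> Phi u" using b unfolding Phi_def by auto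
  have "consis rew pun (insert (Neg c) (BP i u))"
    unfolding consis_def
  proof (rule notI, elim exE conjE)
    fix xs assume xs: "set xs \<subseteq> insert (Neg c) (BP i u)" "LCA rew pun (Neg (conjs xs))"
    define ys where "ys = filter (\<lambda>x. x \<noteq> Neg c) xs"
    have ys: "set ys \<subseteq> BP i u" using xs(1) by (auto simp: ys_def)
    have 1: "LCA rew pun (Imp (conjs ys) c)"
      using ys BP_L[OF u] Sig_L[OF cS] by - (rule pc1[OF xs(2)], auto simp: ys_def)
    have 2: "LCA rew pun (Imp (conjs (map (Box i) ys)) (Box i c))" by (rule box_conjs[OF 1])
    obtain gs where gs: "set gs \<subseteq> u" "LCA rew pun (Imp (conjs gs) (conjs (map (Box i) ys)))"
      using collect[of ys u rew pun "Box i"] BP_box[OF u] ys by blast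
    have "LCA rew pun (Imp (conjs gs) (Box i c))"
      using DL[OF gs(2)] DL[OF 2] by - (rule pc2[OF gs(2) 2], auto)
    then show False using consis_deriv[OF uc _ _ nb] gs(1) unfolding Phi_def by blast
  qed
  then obtain u' where u': "u' \<in> W" "consis rew pun (insert (Neg c) (BP i u) \<union> Phi u')"
    using lind by blast
  have "Rel i u u'" by (rule BP_Rel[OF u'(2) _ u]) auto
  moreover have "c \<notin> u'" by (rule mem_neg[OF u'(2)]) (auto simp: cS)
  ultimately show ?thesis using u' by blast
qed

definition Base :: "('g \<Rightarrow> 'a) \<Rightarrow> 'g \<Rightarrow> ('a,'g) fm set \<Rightarrow> ('a,'g) fm set \<Rightarrow> bool" where
  "Base r i w u \<longleftrightarrow> (\<exists>a. Tri i (Imp a (Atom (r i))) \<in> w \<and> a \<in> u)"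

lemma ex_mod: assumes k: "(k,kr,r) \<in> kinds" and u: "u \<in> W" and b: "Mod k i p \<in> Sig" "Mod k i p \<notin> u"
  shows "\<exists>u'\<in>W. p \<in> u' \<and> \<not> Base r i u u' \<and> (\<forall>q. Mod k i q \<in> u \<longrightarrow> q \<notin> u')"
proof -
  have pS: "p \<in> Sig" using b Sig_sub by blast
  have uc: "consis rew pun (Phi u)" using u unfolding W_def by auto
  have nb: "Neg (Mod k i p) \<in> Phi u" using b unfolding Phi_def by auto
  define Q where "Q = {a. Tri i (Imp a (Atom (r i))) \<in> u} \<union> {q. Mod k i q \<in> u}"
  have QS: "\<forall>q\<in>Q. q \<in> Sig" unfolding Q_def by (auto dest: W_Sig[OF u] Sig_sub Sig_Imp)
  have Qm: "\<forall>q\<in>Q. \<exists>g\<in>u. LCA rew pun (Imp g (Mod k i q))"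
  proof
    fix q assume "q \<in> Q"
    then consider (t) "Tri i (Imp q (Atom (r i))) \<in> u" | (m) "Mod k i q \<in> u" unfolding Q_def by blast
    then show "\<exists>g\<in>u. LCA rew pun (Imp g (Mod k i q))"
    proof cases
      case t
      have "is_L0 q" using Sig_Tri[OF W_Sig[OF u t]] by simp
      then show ?thesis using t kinds_ax(1)[OF k] by blast
    next
      case m
      have "LCA rew pun (Imp (Mod k i q) (Mod k i q))" using Sig_L[OF W_Sig[OF u m]] by (intro pc0) auto
      then show ?thesis using m by blast
    qed
  qed
  have "consis rew pun ({} \<union> insert p (Neg ` Q))"
    unfolding consis_def
  proof (rule notI, elim exE conjE)
    fix xs assume xs: "set xs \<subseteq> {} \<union> insert p (Neg ` Q)" "LCA rew pun (Neg (conjs xs))"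
    obtain bs qs where bq: "set bs \<subseteq> {}" "set qs \<subseteq> Q" "set xs \<subseteq> set bs \<union> insert p (Neg ` set qs)"
      using pick[OF xs(1)] by blast
    have 1: "LCA rew pun (Imp p (disjs qs))"
    proof (rule pc1[OF xs(2)])
      show "is_L (Imp p (disjs qs))" using bq QS pS Sig_L by auto
      fix v assume "pc_eval v (Neg (conjs xs))"
      then obtain x where x: "x \<in> set xs" "\<not> pc_eval v x" by auto
      show "pc_eval v (Imp p (disjs qs))"
      proof (cases "x = p")
        case True then show ?thesis using x by simp
      next
        case False
        then obtain q where "q \<in> set qs" "x = Neg q" using x(1) bq(1,3) by auto
        then show ?thesis using x by auto
      qed
    qed
    have 2: "LCA rew pun (Imp (conjs (map (Mod k i) qs)) (Mod k i p))" by (rule mod_imp_disjs[OF 1])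
    obtain gs where gs: "set gs \<subseteq> u" "LCA rew pun (Imp (conjs gs) (conjs (map (Mod k i) qs)))"
      using collect[of qs u rew pun "Mod k i"] Qm bq(2) by blast
    have "LCA rew pun (Imp (conjs gs) (Mod k i p))"
      using DL[OF gs(2)] DL[OF 2] by - (rule pc2[OF gs(2) 2], auto)
    then show False using consis_deriv[OF uc _ _ nb] gs(1) unfolding Phi_def by blast
  qed
  then obtain u' where u': "u' \<in> W" "consis rew pun (({} \<union> insert p (Neg ` Q)) \<union> Phi u')"
    using lind by blast
  have "p \<in> u'" by (rule mem1[OF u'(2)]) (auto simp: pS)
  moreover have "\<not> Base r i u u'"
    unfolding Base_def using mem_neg[OF u'(2)] QS unfolding Q_def by blast
  moreover have "\<forall>q. Mod k i q \<in> u \<longrightarrow> q \<notin> u'"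
    using mem_neg[OF u'(2)] QS unfolding Q_def by blast
  ultimately show ?thesis using u' by blast
qed

lemma ex_real: assumes k: "(k,kr,r) \<in> kinds" and u: "u \<in> W" and b: "Mod kr i p \<in> Sig" "Mod kr i p \<notin> u"
  shows "\<exists>u'\<in>W. Rel i u u' \<and> p \<in> u' \<and> \<not> Base r i u u' \<and> (\<forall>q. Mod k i q \<in> u \<longrightarrow> q \<notin> u')
     \<and> (\<forall>q. Mod kr i q \<in> u \<longrightarrow> q \<notin> u')"
proof -
  have pS: "p \<in> Sig" using b Sig_sub by blast
  have uc: "consis rew pun (Phi u)" using u unfolding W_def by auto
  have nb: "Neg (Mod kr i p) \<in> Phi u" using b unfolding Phi_def by auto
  define Q where "Q = {a. Tri i (Imp a (Atom (r i))) \<in> u} \<union> {q. Mod k i q \<in> u} \<union> {q. Mod kr i q \<in> u}"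
  have QS: "\<forall>q\<in>Q. q \<in> Sig" unfolding Q_def by (auto dest: W_Sig[OF u] Sig_sub Sig_Imp)
  have Qm: "\<forall>q\<in>Q. \<exists>g\<in>u. LCA rew pun (Imp g (Mod kr i q))"
  proof
    fix q assume "q \<in> Q"
    then consider (t) "Tri i (Imp q (Atom (r i))) \<in> u" | (m) "Mod k i q \<in> u" | (mr) "Mod kr i q \<in> u"
      unfolding Q_def by blast
    then show "\<exists>g\<in>u. LCA rew pun (Imp g (Mod kr i q))"
    proof cases
      case t
      have L0: "is_L0 q" using Sig_Tri[OF W_Sig[OF u t]] by simp
      have 1: "LCA rew pun (Imp (Tri i (Imp q (Atom (r i)))) (Mod k i q))" using kinds_ax(1)[OF k L0] .
      have 2: "LCA rew pun (Imp (Mod k i q) (Mod kr i q))" using kinds_ax(2)[OF k L0_L[OF L0]] .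
      have "LCA rew pun (Imp (Tri i (Imp q (Atom (r i)))) (Mod kr i q))"
        using L0 L0_L[OF L0] by - (rule pc2[OF 1 2], auto)
      then show ?thesis using t by blast
    next
      case m
      then show ?thesis using kinds_ax(2)[OF k Sig_L[OF Sig_sub(6)[OF W_Sig[OF u m]]]] by blast
    next
      case mr
      have "LCA rew pun (Imp (Mod kr i q) (Mod kr i q))" using Sig_L[OF W_Sig[OF u mr]] by (intro pc0) auto
      then show ?thesis using mr by blast
    qed
  qed
  have "consis rew pun (BP i u \<union> insert p (Neg ` Q))"
    unfolding consis_def
  proof (rule notI, elim exE conjE)
    fix xs assume xs: "set xs \<subseteq> BP i u \<union> insert p (Neg ` Q)" "LCA rew pun (Neg (conjs xs))"
    obtain bs qs where bq: "set bs \<subseteq> BP i u" "set qs \<subseteq> Q" "set xs \<subseteq> set bs \<union> insert p (Neg ` set qs)"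
      using pick[OF xs(1)] by blast
    have bL: "\<forall>x\<in>set bs. is_L x" using bq(1) BP_L[OF u] by auto
    have 1: "LCA rew pun (Imp p (disjs (Neg (conjs bs) # qs)))"
    proof (rule pc1[OF xs(2)])
      show "is_L (Imp p (disjs (Neg (conjs bs) # qs)))" using bq QS pS Sig_L bL by auto
      fix v assume "pc_eval v (Neg (conjs xs))"
      then show "pc_eval v (Imp p (disjs (Neg (conjs bs) # qs)))" using bq by auto
    qed
    have 2: "LCA rew pun (Imp (conjs (map (Mod kr i) (Neg (conjs bs) # qs))) (Mod kr i p))"
      by (rule mod_imp_disjs[OF 1])
    have idb: "LCA rew pun (Imp (conjs bs) (conjs bs))" using bL by (intro pc0) auto
    have 3: "LCA rew pun (Imp (conjs (map (Box i) bs)) (Box i (conjs bs)))" by (rule box_conjs[OF idb])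
    have 4: "LCA rew pun (Imp (Box i (conjs bs)) (Mod kr i (Neg (conjs bs))))"
      using kinds_ax(3)[OF k] bL by auto
    obtain gs1 where gs1: "set gs1 \<subseteq> u" "LCA rew pun (Imp (conjs gs1) (conjs (map (Box i) bs)))"
      using collect[of bs u rew pun "Box i"] BP_box[OF u] bq(1) by blast
    obtain gs2 where gs2: "set gs2 \<subseteq> u" "LCA rew pun (Imp (conjs gs2) (conjs (map (Mod kr i) qs)))"
      using collect[of qs u rew pun "Mod kr i"] Qm bq(2) by blast
    have "LCA rew pun (Imp (conjs (gs1 @ gs2)) (Mod kr i p))"
      using DL[OF gs1(2)] DL[OF gs2(2)] DL[OF 2] by - (rule pc5[OF gs1(2) gs2(2) 2 3 4], auto)
    then show False using consis_deriv[OF uc _ _ nb] gs1(1) gs2(1) unfolding Phi_def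
      by (metis Un_subset_iff le_supI1 set_append)
  qed
  then obtain u' where u': "u' \<in> W" "consis rew pun ((BP i u \<union> insert p (Neg ` Q)) \<union> Phi u')"
    using lind by blast
  have "Rel i u u'" by (rule BP_Rel[OF u'(2) _ u]) auto
  moreover have "p \<in> u'" by (rule mem1[OF u'(2)]) (auto simp: pS)
  moreover have "\<not> Base r i u u'"
    unfolding Base_def using mem_neg[OF u'(2)] QS unfolding Q_def by blast
  moreover have "\<forall>q. Mod k i q \<in> u \<longrightarrow> q \<notin> u'"
    using mem_neg[OF u'(2)] QS unfolding Q_def by blast
  moreover have "\<forall>q. Mod kr i q \<in> u \<longrightarrow> q \<notin> u'"
    using mem_neg[OF u'(2)] QS unfolding Q_def by blast
  ultimately show ?thesis using u' by blast
qed

end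



context cm
begin

definition Dset :: "mkind \<Rightarrow> mkind \<Rightarrow> 'g \<Rightarrow> ('a,'g) fm set \<Rightarrow> (('a,'g) fm set \<times> bool) set" where
  "Dset k kr i w = {(u,c). u \<in> W \<and> ((\<exists>p. Mod k i p \<in> w \<and> p \<in> u) \<or>
      (c \<and> Rel i w u \<and> (\<exists>p. Mod kr i p \<in> w \<and> p \<in> u)))}"

definition Bs :: "'g \<Rightarrow> ('a,'g) fm set \<Rightarrow> ('a,'g) fm set" where
  "Bs i w = {a. Tri i a \<in> w} \<union> {Neg (Atom (xa t)) | t. t \<in> W \<times> UNIV \<and> \<not>(snd t \<and> Rel i w (fst t))}
     \<union> {Imp (Atom (xa t)) (Atom (r i)) | t k kr r. (k,kr,r) \<in> kinds \<and> t \<in> Dset k kr i w}"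

definition St :: "('a,'g) fm set \<times> bool \<Rightarrow> ('a,'g) state" where
  "St t = ((\<lambda>i. Bs i (fst t)), {p. Atom p \<in> fst t} \<union> {xa t})"

definition Um :: "('a,'g) state set" where
  "Um = St ` (W \<times> UNIV)"

lemma Dset_sub: "Dset k kr i w \<subseteq> W \<times> UNIV"
  unfolding Dset_def by auto

lemma xa_in: "t \<in> W \<times> UNIV \<Longrightarrow> t' \<in> W \<times> UNIV \<Longrightarrow> xa t' \<in> snd (St t) \<longleftrightarrow> t' = t"
proof -
  assume t: "t \<in> W \<times> UNIV" and t': "t' \<in> W \<times> UNIV"
  have "Atom (xa t') \<notin> fst t" using xa_fresh[OF t'] W_Sig t by (cases t) auto
  then show ?thesis using inj_onD[OF xa_inj _ t' t] unfolding St_def by auto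
qed

lemma F0: "is_L0 a \<Longrightarrow> a \<in> Sig \<Longrightarrow> t \<in> W \<times> UNIV \<Longrightarrow> sat0 (St t) a \<longleftrightarrow> a \<in> fst t"
proof (induction a)
  case (Atom p)
  have "p \<noteq> xa t" using xa_fresh[OF Atom(3)] Atom(2) by auto
  then show ?case unfolding St_def by simp
next
  case (Neg a)
  have "a \<in> Sig" using Neg(3) by (rule Sig_sub)
  then have "sat0 (St t) a \<longleftrightarrow> a \<in> fst t" using Neg by simp
  moreover have "fst t \<in> W" using Neg(4) by auto
  ultimately show ?case using w_neg[of "fst t" a] Neg(3) by simp
next
  case (Conj a b)
  have "a \<in> Sig" "b \<in> Sig" using Conj(4) by (rule Sig_sub)+
  then have "sat0 (St t) a \<longleftrightarrow> a \<in> fst t" "sat0 (St t) b \<longleftrightarrow> b \<in> fst t" using Conj by simp_all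
  moreover have "fst t \<in> W" using Conj(5) by auto
  ultimately show ?case using w_conj[of "fst t" a b] Conj(4) by simp
next
  case (Tri j a)
  have aS: "a \<in> Sig" using Tri(3) by (rule Sig_sub)
  have 1: "a \<noteq> Neg (Atom (xa t'))" if "t' \<in> W \<times> UNIV" for t'
    using aS xa_fresh[OF that] Sig_sub(1) by blast
  have 2: "a \<noteq> Imp (Atom (xa t')) b" if "t' \<in> W \<times> UNIV" for t' b
    using aS xa_fresh[OF that] Sig_Imp(1) by blast
  have "a \<in> Bs j (fst t) \<longleftrightarrow> Tri j a \<in> fst t"
    unfolding Bs_def using 1 2 Dset_sub by blast
  then show ?case unfolding St_def by simp
qed simp_all

lemma Um_states: "Um \<subseteq> states"
proof
  fix S assume "S \<in> Um"
  then obtain t where t: "t \<in> W \<times> UNIV" "S = St t" unfolding Um_def by auto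
  have "is_L0 a" if "a \<in> Bs i (fst t)" for i a
    using that t(1) unfolding Bs_def by (auto dest: W_Sig intro: Sig_Tri)
  then show "S \<in> states" unfolding states_def St_def t(2) by auto
qed

lemma F1: assumes v: "v \<in> W" and t: "t \<in> W \<times> UNIV"
  shows "relE i (St (v,c)) (St t) \<longleftrightarrow> snd t \<and> Rel i v (fst t)"
proof
  assume h: "relE i (St (v,c)) (St t)"
  show "snd t \<and> Rel i v (fst t)"
  proof (rule ccontr)
    assume "\<not> (snd t \<and> Rel i v (fst t))"
    then have "Neg (Atom (xa t)) \<in> {Neg (Atom (xa t')) |t'. t' \<in> W \<times> UNIV \<and> \<not> (snd t' \<and> Rel i v (fst t'))}"
      using t by blast
    then have "Neg (Atom (xa t)) \<in> Bs i v" unfolding Bs_def by (rule UnI1[OF UnI2])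
    then have "sat0 (St t) (Neg (Atom (xa t)))" using h unfolding relE_def St_def by auto
    then show False using xa_in[OF t t] by simp
  qed
next
  assume h: "snd t \<and> Rel i v (fst t)"
  show "relE i (St (v,c)) (St t)" unfolding relE_def
  proof
    fix a assume "a \<in> fst (St (v,c)) i"
    then have "a \<in> Bs i v" unfolding St_def by simp
    then consider (tri) "Tri i a \<in> v"
      | (ng) t' where "a = Neg (Atom (xa t'))" "t' \<in> W \<times> UNIV" "\<not>(snd t' \<and> Rel i v (fst t'))"
      | (im) t' k kr r where "a = Imp (Atom (xa t')) (Atom (r i))" "(k,kr,r) \<in> kinds" "t' \<in> Dset k kr i v"
      unfolding Bs_def by blast
    then show "sat0 (St t) a"
    proof cases
      case tri
      then have "a \<in> fst t" using h unfolding Rel_def by auto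
      moreover have "a \<in> Sig" "is_L0 a" using W_Sig[OF v tri] Sig_sub Sig_Tri by blast+
      ultimately show ?thesis using F0 t by blast
    next
      case ng
      then have "t' \<noteq> t" using h by auto
      then show ?thesis using ng xa_in[OF t ng(2)] by simp
    next
      case im
      have t': "t' \<in> W \<times> UNIV" using im(3) Dset_sub by blast
      show ?thesis
      proof (cases "t' = t")
        case False
        then show ?thesis using im xa_in[OF t t'] by simp
      next
        case True
        obtain u b where tt: "t = (u,b)" by (cases t)
        have "Atom (r i) \<in> u"
          using im(3) h im(2) True unfolding Dset_def Rel_def tt by auto
        then show ?thesis using im(1) tt unfolding St_def by simp
      qed
    qed
  qed
qed

lemma Imp_in_Bs: assumes k: "(k,kr,r) \<in> kinds"
  shows "Imp a (Atom (r i)) \<in> Bs i v \<longleftrightarrow> Tri i (Imp a (Atom (r i))) \<in> v \<or> (\<exists>t'. a = Atom (xa t') \<and> t' \<in> Dset k kr i v)"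
proof -
  have "(\<exists>t' k' kr' r'. Imp a (Atom (r i)) = Imp (Atom (xa t')) (Atom (r' i)) \<and> (k',kr',r') \<in> kinds \<and> t' \<in> Dset k' kr' i v)
    \<longleftrightarrow> (\<exists>t'. a = Atom (xa t') \<and> t' \<in> Dset k kr i v)"
  proof
    assume "\<exists>t' k' kr' r'. Imp a (Atom (r i)) = Imp (Atom (xa t')) (Atom (r' i)) \<and> (k',kr',r') \<in> kinds \<and> t' \<in> Dset k' kr' i v"
    then obtain t' k' kr' r' where h: "a = Atom (xa t')" "r i = r' i" "(k',kr',r') \<in> kinds" "t' \<in> Dset k' kr' i v"
      by auto
    then have "k = k'" "kr = kr'" using kinds_uniq[OF k h(3) h(2)] by auto
    then show "\<exists>t'. a = Atom (xa t') \<and> t' \<in> Dset k kr i v" using h by blast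
  next
    assume "\<exists>t'. a = Atom (xa t') \<and> t' \<in> Dset k kr i v"
    then show "\<exists>t' k' kr' r'. Imp a (Atom (r i)) = Imp (Atom (xa t')) (Atom (r' i)) \<and> (k',kr',r') \<in> kinds \<and> t' \<in> Dset k' kr' i v"
      using k by blast
  qed
  moreover have "Imp a (Atom (r i)) \<notin> {Neg (Atom (xa t)) | t. t \<in> W \<times> UNIV \<and> \<not>(snd t \<and> Rel i v (fst t))}"
    by auto
  ultimately show ?thesis unfolding Bs_def Un_iff mem_Collect_eq by blast
qed

lemma fst_St: "fst (St t) i = Bs i (fst t)"
  unfolding St_def by simp

lemma F2: assumes k: "(k,kr,r) \<in> kinds" and v: "v \<in> W" and t: "t \<in> W \<times> UNIV"
  shows "(\<exists>a. is_L0 a \<and> Imp a (Atom (r i)) \<in> Bs i v \<and> sat0 (St t) a) \<longleftrightarrow> Base r i v (fst t) \<or> t \<in> Dset k kr i v"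
proof
  assume "\<exists>a. is_L0 a \<and> Imp a (Atom (r i)) \<in> Bs i v \<and> sat0 (St t) a"
  then obtain a where a: "is_L0 a" "Imp a (Atom (r i)) \<in> Bs i v" "sat0 (St t) a" by blast
  from a(2) consider (tri) "Tri i (Imp a (Atom (r i))) \<in> v" | (x) t' where "a = Atom (xa t')" "t' \<in> Dset k kr i v"
    unfolding Imp_in_Bs[OF k] by blast
  then show "Base r i v (fst t) \<or> t \<in> Dset k kr i v"
  proof cases
    case tri
    then have "Imp a (Atom (r i)) \<in> Sig" using W_Sig[OF v] Sig_sub(4) by blast
    then have "a \<in> Sig" by (rule Sig_Imp)
    then have "a \<in> fst t" using F0[OF a(1) _ t] a(3) by blast
    then show ?thesis using tri unfolding Base_def by blast
  next
    case x
    have "t' \<in> W \<times> UNIV" using x(2) Dset_sub by blast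
    then have "t' = t" using xa_in[OF t] a(3) x(1) unfolding St_def by simp
    then show ?thesis using x by blast
  qed
next
  assume "Base r i v (fst t) \<or> t \<in> Dset k kr i v"
  then show "\<exists>a. is_L0 a \<and> Imp a (Atom (r i)) \<in> Bs i v \<and> sat0 (St t) a"
  proof
    assume "Base r i v (fst t)"
    then obtain a where a: "Tri i (Imp a (Atom (r i))) \<in> v" "a \<in> fst t" unfolding Base_def by blast
    then have "Imp a (Atom (r i)) \<in> Sig" "is_L0 (Imp a (Atom (r i)))"
      using W_Sig[OF v] Sig_sub(4) Sig_Tri by blast+
    then have aa: "a \<in> Sig" "is_L0 a" using Sig_Imp(1) by auto
    then have "sat0 (St t) a" using F0[OF aa(2) aa(1) t] a(2) by blast
    moreover have "Imp a (Atom (r i)) \<in> Bs i v" unfolding Imp_in_Bs[OF k] using a(1) by blast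
    ultimately show ?thesis using aa by blast
  next
    assume d: "t \<in> Dset k kr i v"
    have "sat0 (St t) (Atom (xa t))" using xa_in[OF t t] unfolding St_def by simp
    moreover have "Imp (Atom (xa t)) (Atom (r i)) \<in> Bs i v" unfolding Imp_in_Bs[OF k] using d by blast
    ultimately show ?thesis by (intro exI[of _ "Atom (xa t)"]) simp
  qed
qed

lemma relA_St: "v \<in> W \<Longrightarrow> t \<in> W \<times> UNIV \<Longrightarrow>
  relA rew i (St (v,c)) (St t) \<longleftrightarrow> Base rew i v (fst t) \<or> t \<in> Dset MA MAreal i v"
proof -
  assume v: "v \<in> W" and t: "t \<in> W \<times> UNIV"
  have "relA rew i (St (v,c)) (St t) \<longleftrightarrow> (\<exists>a. is_L0 a \<and> Imp a (Atom (rew i)) \<in> Bs i v \<and> sat0 (St t) a)"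
    unfolding relA_def Des_def fst_St by auto
  also have "\<dots> \<longleftrightarrow> Base rew i v (fst t) \<or> t \<in> Dset MA MAreal i v"
    by (rule F2[OF _ v t]) (simp add: kinds_def)
  finally show ?thesis .
qed

lemma relR_St: "v \<in> W \<Longrightarrow> t \<in> W \<times> UNIV \<Longrightarrow>
  relR pun i (St (v,c)) (St t) \<longleftrightarrow> Base pun i v (fst t) \<or> t \<in> Dset MR MRreal i v"
proof -
  assume v: "v \<in> W" and t: "t \<in> W \<times> UNIV"
  have "relR pun i (St (v,c)) (St t) \<longleftrightarrow> (\<exists>a. is_L0 a \<and> Imp a (Atom (pun i)) \<in> Bs i v \<and> sat0 (St t) a)"
    unfolding relR_def Und_def fst_St by auto
  also have "\<dots> \<longleftrightarrow> Base pun i v (fst t) \<or> t \<in> Dset MR MRreal i v"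
    by (rule F2[OF _ v t]) (simp add: kinds_def)
  finally show ?thesis .
qed

lemma T_box: assumes v: "v \<in> W" and s: "Box i a \<in> Sig"
  shows "(\<forall>u\<in>W. Rel i v u \<longrightarrow> a \<in> u) \<longleftrightarrow> Box i a \<in> v"
  using ex_box[OF v s] unfolding Rel_def by blast

lemma T_mod: assumes k: "(k,kr,r) \<in> kinds" and v: "v \<in> W" and s: "Mod k i a \<in> Sig"
  shows "(\<forall>t\<in>W \<times> UNIV. a \<in> fst t \<longrightarrow> Base r i v (fst t) \<or> t \<in> Dset k kr i v) \<longleftrightarrow> Mod k i a \<in> v"
proof
  assume h: "\<forall>t\<in>W \<times> UNIV. a \<in> fst t \<longrightarrow> Base r i v (fst t) \<or> t \<in> Dset k kr i v"
  show "Mod k i a \<in> v"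
  proof (rule ccontr)
    assume "Mod k i a \<notin> v"
    then obtain u where u: "u \<in> W" "a \<in> u" "\<not> Base r i v u" "\<forall>q. Mod k i q \<in> v \<longrightarrow> q \<notin> u"
      using ex_mod[OF k v s] by blast
    have "(u, False) \<notin> Dset k kr i v" using u(4) unfolding Dset_def by auto
    then show False using h u by auto
  qed
next
  assume "Mod k i a \<in> v"
  then show "\<forall>t\<in>W \<times> UNIV. a \<in> fst t \<longrightarrow> Base r i v (fst t) \<or> t \<in> Dset k kr i v"
    unfolding Dset_def by auto
qed

lemma T_real: assumes k: "(k,kr,r) \<in> kinds" and v: "v \<in> W" and s: "Mod kr i a \<in> Sig"
  shows "(\<forall>t\<in>W \<times> UNIV. a \<in> fst t \<and> snd t \<and> Rel i v (fst t) \<longrightarrow> Base r i v (fst t) \<or> t \<in> Dset k kr i v)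
     \<longleftrightarrow> Mod kr i a \<in> v"
proof
  assume h: "\<forall>t\<in>W \<times> UNIV. a \<in> fst t \<and> snd t \<and> Rel i v (fst t) \<longrightarrow> Base r i v (fst t) \<or> t \<in> Dset k kr i v"
  show "Mod kr i a \<in> v"
  proof (rule ccontr)
    assume "Mod kr i a \<notin> v"
    then obtain u where u: "u \<in> W" "Rel i v u" "a \<in> u" "\<not> Base r i v u" "\<forall>q. Mod k i q \<in> v \<longrightarrow> q \<notin> u"
      "\<forall>q. Mod kr i q \<in> v \<longrightarrow> q \<notin> u"
      using ex_real[OF k v s] by blast
    have "(u, True) \<notin> Dset k kr i v" using u(5,6) unfolding Dset_def by auto
    then show False using h u by auto
  qed
next
  assume "Mod kr i a \<in> v"
  then show "\<forall>t\<in>W \<times> UNIV. a \<in> fst t \<and> snd t \<and> Rel i v (fst t) \<longrightarrow> Base r i v (fst t) \<or> t \<in> Dset k kr i v"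
    unfolding Dset_def by auto
qed

lemma kA: "(MA, MAreal, rew) \<in> kinds" and kR: "(MR, MRreal, pun) \<in> kinds"
  unfolding kinds_def by auto

lemma sat_Um_ball: "(\<forall>S'\<in>Um. P S') \<longleftrightarrow> (\<forall>t'\<in>W \<times> UNIV. P (St t'))"
  unfolding Um_def by blast

lemma truth: "c \<in> Sig \<Longrightarrow> t \<in> W \<times> UNIV \<Longrightarrow> sat rew pun Um (St t) c \<longleftrightarrow> c \<in> fst t"
proof (induction c arbitrary: t)
  case (Atom p)
  then show ?case using F0[of "Atom p" t] by simp
next
  case (Neg a)
  have "a \<in> Sig" using Neg(2) by (rule Sig_sub)
  then have "sat rew pun Um (St t) a \<longleftrightarrow> a \<in> fst t" using Neg by simp
  moreover have "fst t \<in> W" using Neg(3) by auto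
  ultimately show ?case using w_neg[of "fst t" a] Neg(2) by simp
next
  case (Conj a b)
  have "a \<in> Sig" "b \<in> Sig" using Conj(3) by (rule Sig_sub)+
  then have "sat rew pun Um (St t) a \<longleftrightarrow> a \<in> fst t" "sat rew pun Um (St t) b \<longleftrightarrow> b \<in> fst t"
    using Conj by simp_all
  moreover have "fst t \<in> W" using Conj(4) by auto
  ultimately show ?case using w_conj[of "fst t" a b] Conj(3) by simp
next
  case (Tri i a)
  then show ?case using F0[of "Tri i a" t] Sig_Tri by simp
next
  case (Box i a)
  obtain v c where t: "t = (v,c)" by (cases t)
  have v: "v \<in> W" using Box t by auto
  have IH: "\<And>t'. t' \<in> W \<times> UNIV \<Longrightarrow> sat rew pun Um (St t') a \<longleftrightarrow> a \<in> fst t'"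
    using Box Sig_sub by blast
  have "sat rew pun Um (St t) (Box i a) \<longleftrightarrow> (\<forall>t'\<in>W \<times> UNIV. relE i (St (v,c)) (St t') \<longrightarrow> sat rew pun Um (St t') a)"
    unfolding t by (simp only: sat.simps sat_Um_ball)
  also have "\<dots> \<longleftrightarrow> (\<forall>t'\<in>W \<times> UNIV. snd t' \<and> Rel i v (fst t') \<longrightarrow> a \<in> fst t')"
    by (rule ball_cong) (simp_all add: F1[OF v] IH)
  also have "\<dots> \<longleftrightarrow> (\<forall>u\<in>W. Rel i v u \<longrightarrow> a \<in> u)" by auto
  also have "\<dots> \<longleftrightarrow> Box i a \<in> v" using T_box[OF v] Box by auto
  finally show ?case using t by simp
next
  case (Mod k i a)
  obtain v c where t: "t = (v,c)" by (cases t)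
  have v: "v \<in> W" using Mod t by auto
  have s: "Mod k i a \<in> Sig" using Mod by auto
  have IH: "\<And>t'. t' \<in> W \<times> UNIV \<Longrightarrow> sat rew pun Um (St t') a \<longleftrightarrow> a \<in> fst t'"
    using Mod Sig_sub by blast
  show ?case
  proof (cases k)
    case MA
    have "sat rew pun Um (St t) (Mod k i a) \<longleftrightarrow>
      (\<forall>t'\<in>W \<times> UNIV. sat rew pun Um (St t') a \<longrightarrow> relA rew i (St (v,c)) (St t'))"
      unfolding t MA by (simp only: sat.simps sat_Um_ball)
    also have "\<dots> \<longleftrightarrow> (\<forall>t'\<in>W \<times> UNIV. a \<in> fst t' \<longrightarrow> Base rew i v (fst t') \<or> t' \<in> Dset MA MAreal i v)"
      by (rule ball_cong) (simp_all add: relA_St[OF v] IH)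
    also have "\<dots> \<longleftrightarrow> Mod k i a \<in> v" using T_mod[OF kA v] s MA by simp
    finally show ?thesis using t by simp
  next
    case MR
    have "sat rew pun Um (St t) (Mod k i a) \<longleftrightarrow>
      (\<forall>t'\<in>W \<times> UNIV. sat rew pun Um (St t') a \<longrightarrow> relR pun i (St (v,c)) (St t'))"
      unfolding t MR by (simp only: sat.simps sat_Um_ball)
    also have "\<dots> \<longleftrightarrow> (\<forall>t'\<in>W \<times> UNIV. a \<in> fst t' \<longrightarrow> Base pun i v (fst t') \<or> t' \<in> Dset MR MRreal i v)"
      by (rule ball_cong) (simp_all add: relR_St[OF v] IH)
    also have "\<dots> \<longleftrightarrow> Mod k i a \<in> v" using T_mod[OF kR v] s MR by simp
    finally show ?thesis using t by simp
  next
    case MAreal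
    have "sat rew pun Um (St t) (Mod k i a) \<longleftrightarrow>
      (\<forall>t'\<in>W \<times> UNIV. sat rew pun Um (St t') a \<and> relE i (St (v,c)) (St t') \<longrightarrow> relA rew i (St (v,c)) (St t'))"
      unfolding t MAreal by (simp only: sat.simps sat_Um_ball)
    also have "\<dots> \<longleftrightarrow> (\<forall>t'\<in>W \<times> UNIV. a \<in> fst t' \<and> snd t' \<and> Rel i v (fst t') \<longrightarrow> Base rew i v (fst t') \<or> t' \<in> Dset MA MAreal i v)"
      by (rule ball_cong) (simp_all add: relA_St[OF v] IH F1[OF v])
    also have "\<dots> \<longleftrightarrow> Mod k i a \<in> v" using T_real[OF kA v] s MAreal by simp
    finally show ?thesis using t by simp
  next
    case MRreal
    have "sat rew pun Um (St t) (Mod k i a) \<longleftrightarrow>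
      (\<forall>t'\<in>W \<times> UNIV. sat rew pun Um (St t') a \<and> relE i (St (v,c)) (St t') \<longrightarrow> relR pun i (St (v,c)) (St t'))"
      unfolding t MRreal by (simp only: sat.simps sat_Um_ball)
    also have "\<dots> \<longleftrightarrow> (\<forall>t'\<in>W \<times> UNIV. a \<in> fst t' \<and> snd t' \<and> Rel i v (fst t') \<longrightarrow> Base pun i v (fst t') \<or> t' \<in> Dset MR MRreal i v)"
      by (rule ball_cong) (simp_all add: relR_St[OF v] IH F1[OF v])
    also have "\<dots> \<longleftrightarrow> Mod k i a \<in> v" using T_real[OF kR v] s MRreal by simp
    finally show ?thesis using t by simp
  qed
qed

lemma completeness: "valid rew pun phi \<Longrightarrow> LCA rew pun phi"
proof (rule ccontr)
  assume val: "valid rew pun phi" and nd: "\<not> LCA rew pun phi"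
  have "consis rew pun {Neg phi}"
    unfolding consis_def
  proof (rule notI, elim exE conjE)
    fix xs assume xs: "set xs \<subseteq> {Neg phi}" "LCA rew pun (Neg (conjs xs))"
    have "LCA rew pun phi"
    proof (rule pc1[OF xs(2)])
      show "is_L phi" by (rule phiL)
      fix v assume "pc_eval v (Neg (conjs xs))"
      then show "pc_eval v phi" using xs(1) by auto
    qed
    then show False using nd by simp
  qed
  then obtain u where u: "u \<in> W" "consis rew pun ({Neg phi} \<union> Phi u)" using lind by blast
  have pS: "phi \<in> Sig" unfolding Sig_def using subs_self by auto
  have "phi \<notin> u" by (rule mem_neg[OF u(2)]) (auto simp: pS)
  then have "\<not> sat rew pun Um (St (u, True)) phi" using truth[OF pS, of "(u,True)"] u(1) by simp
  moreover have "St (u, True) \<in> Um" using u(1) unfolding Um_def by auto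
  ultimately show False using val Um_states unfolding valid_def by blast
qed

end

theorem theorem2:
  fixes rew pun :: "'g::finite \<Rightarrow> 'a::countable"
  assumes "infinite (UNIV :: 'a set)"
    and "inj rew" and "inj pun" and "range rew \<inter> range pun = {}"
    and "is_L p"
  shows "LCA rew pun p \<longleftrightarrow> valid rew pun p"
proof
  assume "LCA rew pun p" then show "valid rew pun p" by (rule soundness)
next
  assume v: "valid rew pun p"
  interpret cm rew pun p using assms by unfold_locales auto
  show "LCA rew pun p" using completeness[OF v] .
qed


end
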